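(* Let $T$ be a real $n\times n$ orthogonal projection matrix (symmetric, $T^2=T$) of rank $k$ whose diagonal entries are all equal. Then for every $0<m<n$, every principal $m\times m$ submatrix $T'$ of $T$ satisfies $\operatorname{rank}(T')\ge m\cdot k/n$. *)

theory Defs
  imports "Jordan_Normal_Form.DL_Rank" "Jordan_Normal_Form.DL_Submatrix"
begin

end

theory Submission
  imports Defs "Jordan_Normal_Form.Gram_Schmidt"
begin

lemma cs_sum:
  fixes a b :: "'a \<Rightarrow> real"
  shows "(\<Sum>i\<in>I. a i * b i)\<^sup>2 \<le> (\<Sum>i\<in>I. (a i)\<^sup>2) * (\<Sum>i\<in>I. (b i)\<^sup>2)"
proof (cases "(\<Sum>i\<in>I. (b i)\<^sup>2) > 0")
  case False
  then consider "\<And>i. i\<in>I \<Longrightarrow> b i = 0" | "infinite I"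
    by (metis (mono_tags, lifting) sum_pos2 zero_le_power2 zero_less_power2)
  thus ?thesis
    by fastforce
next
  case True
  define B where "B = (\<Sum>i\<in>I. (b i)\<^sup>2)"
  define S where "S = (\<Sum>i\<in>I. a i * b i)"
  define Q where "Q = (\<Sum>i\<in>I. (a i)\<^sup>2)"
  define r where "r \<equiv> S / B"
  have e: "(a i - r * b i)\<^sup>2 = (a i)\<^sup>2 - (2 * r) * (a i * b i) + r\<^sup>2 * (b i)\<^sup>2" for i
    unfolding power2_eq_square by (simp add: algebra_simps)
  have "0 \<le> (\<Sum>i\<in>I. (a i - r * b i)\<^sup>2)"
    by (intro sum_nonneg) simp
  also have "(\<Sum>i\<in>I. (a i - r * b i)\<^sup>2) = Q - (2 * r) * S + r\<^sup>2 * B"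
    unfolding e Q_def S_def B_def
    by (simp only: sum.distrib sum_subtractf sum_distrib_left)
  also have "r\<^sup>2 * B = r * S" unfolding r_def using True B_def by (simp add: power2_eq_square)
  finally have h: "0 \<le> Q - (2 * r) * S + r * S" .
  have "Q - (2 * r) * S + r * S = Q - r * S" by (simp add: algebra_simps)
  with h have "0 \<le> Q - r * S" by simp
  moreover have "r * S = S * S / B" unfolding r_def by simp
  ultimately have "S * S / B \<le> Q" by linarith
  then have "S * S \<le> Q * B" using True B_def by (simp add: pos_divide_le_eq)
  then show ?thesis unfolding S_def Q_def B_def by (simp add: power2_eq_square)
qed
lemma core:
  fixes A :: "nat \<Rightarrow> nat \<Rightarrow> real" and v :: "'b \<Rightarrow> nat \<Rightarrow> real"
  assumes fin: "finite U"
  and pos: "\<And>u. u\<in>U \<Longrightarrow> (\<Sum>l<d. v u l * v u l) \<noteq> 0"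
  and sym: "\<And>i j. i<d \<Longrightarrow> j<d \<Longrightarrow> A i j = A j i"
  and ex: "\<And>i j. i<d \<Longrightarrow> j<d \<Longrightarrow> A i j = (\<Sum>u\<in>U. (\<Sum>l<d. A l j * v u l) / (\<Sum>l<d. v u l * v u l) * v u i)"
  shows "(\<Sum>i<d. A i i)^2 \<le> real (card U) * (\<Sum>i<d. \<Sum>j<d. (A i j)^2)"
proof -
  define N where "N u = (\<Sum>l<d. v u l * v u l)" for u
  define w where "w u j = (\<Sum>l<d. A l j * v u l)" for u j
  have Npos: "N u > 0" if "u \<in> U" for u
  proof -
    have "N u \<ge> 0" unfolding N_def by (simp add: sum_nonneg)
    then show ?thesis using pos[OF that] unfolding N_def by linarith
  qed
  have ex': "A i j = (\<Sum>u\<in>U. w u j / N u * v u i)" if "i<d" "j<d" for i j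
    using ex[OF that] unfolding w_def N_def .
  define a where "a u = (\<Sum>i<d. w u i * v u i) / N u" for u
  have tr: "(\<Sum>i<d. A i i) = (\<Sum>u\<in>U. a u)"
  proof -
    have "(\<Sum>i<d. A i i) = (\<Sum>i<d. \<Sum>u\<in>U. w u i / N u * v u i)"
      using ex' by (intro sum.cong) auto
    also have "\<dots> = (\<Sum>u\<in>U. \<Sum>i<d. w u i / N u * v u i)" by (rule sum.swap)
    also have "\<dots> = (\<Sum>u\<in>U. a u)" unfolding a_def
      by (intro sum.cong refl) (simp add: sum_divide_distrib)
    finally show ?thesis .
  qed
  have fr: "(\<Sum>i<d. \<Sum>j<d. (A i j)^2) = (\<Sum>u\<in>U. (\<Sum>j<d. (w u j)^2) / N u)"
  proof -
    have "(\<Sum>i<d. \<Sum>j<d. (A i j)^2) = (\<Sum>j<d. \<Sum>i<d. A i j * A i j)"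
      by (subst sum.swap) (simp add: power2_eq_square)
    also have "\<dots> = (\<Sum>j<d. \<Sum>i<d. A i j * (\<Sum>u\<in>U. w u j / N u * v u i))"
      using ex' by (intro sum.cong refl) auto
    also have "\<dots> = (\<Sum>j<d. \<Sum>u\<in>U. w u j / N u * (\<Sum>i<d. A i j * v u i))"
      by (intro sum.cong refl) (simp add: sum_distrib_left sum_distrib_right mult_ac sum.swap[of _ U])
    also have "\<dots> = (\<Sum>j<d. \<Sum>u\<in>U. (w u j)^2 / N u)"
      unfolding w_def by (simp add: power2_eq_square)
    also have "\<dots> = (\<Sum>u\<in>U. (\<Sum>j<d. (w u j)^2) / N u)"
      by (subst sum.swap) (simp add: sum_divide_distrib)
    finally show ?thesis .
  qed
  have cs1: "(a u)^2 \<le> (\<Sum>j<d. (w u j)^2) / N u" if u: "u \<in> U" for u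
  proof -
    have "(\<Sum>i<d. w u i * v u i)^2 \<le> (\<Sum>i<d. (w u i)^2) * (\<Sum>i<d. (v u i)^2)"
      by (rule cs_sum)
    also have "(\<Sum>i<d. (v u i)^2) = N u" unfolding N_def by (simp add: power2_eq_square)
    finally have h: "(\<Sum>i<d. w u i * v u i)^2 \<le> (\<Sum>i<d. (w u i)^2) * N u" .
    have "(a u)^2 = (\<Sum>i<d. w u i * v u i)^2 / (N u * N u)"
      unfolding a_def by (simp add: power2_eq_square)
    also have "\<dots> \<le> (\<Sum>i<d. (w u i)^2) * N u / (N u * N u)"
      using h Npos[OF u] by (intro divide_right_mono) auto
    also have "\<dots> = (\<Sum>j<d. (w u j)^2) / N u" using Npos[OF u] by simp
    finally show ?thesis .
  qed
  have cs2: "(\<Sum>u\<in>U. a u)^2 \<le> real (card U) * (\<Sum>u\<in>U. (a u)^2)"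
    using cs_sum[of a "\<lambda>_. 1" U] by (simp add: mult.commute)
  have "(\<Sum>u\<in>U. (a u)^2) \<le> (\<Sum>u\<in>U. (\<Sum>j<d. (w u j)^2) / N u)"
    using cs1 by (rule sum_mono)
  then show ?thesis unfolding tr fr using cs2
    by (meson mult_left_mono of_nat_0_le_iff order_trans)
qed

lemma trace_proj:
  fixes T :: "nat \<Rightarrow> nat \<Rightarrow> real" and v :: "'b \<Rightarrow> nat \<Rightarrow> real"
  assumes fin: "finite U"
  and pos: "\<And>u. u\<in>U \<Longrightarrow> (\<Sum>l<d. v u l * v u l) \<noteq> 0"
  and sym: "\<And>i j. i<d \<Longrightarrow> j<d \<Longrightarrow> T i j = T j i"
  and ex: "\<And>i j. i<d \<Longrightarrow> j<d \<Longrightarrow> T i j = (\<Sum>u\<in>U. (\<Sum>l<d. T l j * v u l) / (\<Sum>l<d. v u l * v u l) * v u i)"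
  and fx: "\<And>u j. u\<in>U \<Longrightarrow> j<d \<Longrightarrow> (\<Sum>l<d. T j l * v u l) = v u j"
  shows "(\<Sum>i<d. T i i) = real (card U)"
proof -
  define N where "N u = (\<Sum>l<d. v u l * v u l)" for u
  have w: "(\<Sum>l<d. T l j * v u l) = v u j" if "u \<in> U" "j < d" for u j
  proof -
    have "(\<Sum>l<d. T l j * v u l) = (\<Sum>l<d. T j l * v u l)"
      using sym that(2) by (intro sum.cong refl) auto
    then show ?thesis using fx[OF that] by simp
  qed
  have "(\<Sum>i<d. T i i) = (\<Sum>i<d. \<Sum>u\<in>U. v u i / N u * v u i)"
    using ex w unfolding N_def by (intro sum.cong refl) auto
  also have "\<dots> = (\<Sum>u\<in>U. \<Sum>i<d. v u i / N u * v u i)" by (rule sum.swap)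
  also have "\<dots> = (\<Sum>u\<in>U. 1)"
  proof (intro sum.cong refl)
    fix u assume "u \<in> U"
    have "(\<Sum>i<d. v u i / N u * v u i) = (\<Sum>i<d. v u i * v u i) / N u"
      by (simp add: sum_divide_distrib)
    also have "\<dots> = 1" using pos[OF \<open>u\<in>U\<close>] unfolding N_def by simp
    finally show "(\<Sum>i<d. v u i / N u * v u i) = 1" .
  qed
  finally show ?thesis by simp
qed

lemma basis_exists:
  fixes A :: "real mat"
  assumes A: "A \<in> carrier_mat d d"
  shows "\<exists>U. finite U \<and> U \<subseteq> carrier_vec d \<and> card U = vec_space.rank d A
     \<and> (\<forall>u\<in>U. u \<bullet> u \<noteq> 0) \<and> (\<forall>u\<in>U. \<forall>v\<in>U. u \<noteq> v \<longrightarrow> u \<bullet> v = 0)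
     \<and> (\<forall>c\<in>set (cols A). \<exists>a B. c = module.lincomb (module_vec TYPE(real) d) a B \<and> finite B \<and> B \<subseteq> U)
     \<and> (\<forall>u\<in>U. \<exists>a B. u = module.lincomb (module_vec TYPE(real) d) a B \<and> finite B \<and> B \<subseteq> set (cols A))"
proof -
  interpret cof_vec_space d "TYPE(real)" .
  have colsC: "set (cols A) \<subseteq> carrier_vec d" using A cols_dim by blast
  obtain S where S: "maximal S (\<lambda>T. T \<subseteq> set (cols A) \<and> lin_indpt T)"
    using maximal_exists[of "(\<lambda>T. T \<subseteq> set (cols A) \<and> lin_indpt T)" "card (set (cols A))" "{}"]
    by (meson List.finite_set card_mono empty_iff empty_subsetI finite_lin_indpt2 rev_finite_subset)
  have rk: "rank A = card S" using rank_card_indpt[OF A S] .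
  have SC: "S \<subseteq> set (cols A)" and Si: "lin_indpt S" using S unfolding maximal_def by auto
  have Sf: "finite S" using SC finite_subset by blast
  have SC2: "S \<subseteq> carrier_vec d" using SC colsC by auto
  have colspan: "c \<in> span S" if c: "c \<in> set (cols A)" for c
  proof (cases "c \<in> S")
    case True then show ?thesis using span_mem[OF SC2] by auto
  next
    case False
    have "\<not> lin_indpt (S \<union> {c})"
    proof
      assume "lin_indpt (S \<union> {c})"
      then have "S \<union> {c} = S" using S c SC unfolding maximal_def by blast
      then show False using False by auto
    qed
    then show ?thesis using lin_dep_iff_in_span[OF SC2 Si _ False] c colsC by auto
  qed
  obtain ws where ws: "set ws = S" "distinct ws" using finite_distinct_list[OF Sf] by blast
  define us where "us = gram_schmidt d ws"
  note gs = gram_schmidt_result[OF _ ws(2) _ us_def, unfolded ws(1), OF SC2 Si]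
  define U where "U = set us"
  show ?thesis
  proof (intro exI[of _ U] conjI ballI impI)
    show "finite U" unfolding U_def by simp
    show UC: "U \<subseteq> carrier_vec d" unfolding U_def using gs by auto
    show "card U = rank A" unfolding U_def rk using gs ws by (metis distinct_card)
    fix u assume u: "u \<in> U"
    then obtain i where i: "i < length us" "u = us ! i" unfolding U_def by (metis in_set_conv_nth)
    have "us ! i \<bullet>c us ! i \<noteq> 0" using gs(2) i(1) by (meson corthogonalD)
    then show "u \<bullet> u \<noteq> 0" using i by simp
    {
      fix v assume v: "v \<in> U" "u \<noteq> v"
      then obtain j where j: "j < length us" "v = us ! j" unfolding U_def by (metis in_set_conv_nth)
      have "i \<noteq> j" using i j v by auto
      then have "us ! i \<bullet>c us ! j = 0" using gs(2) i(1) j(1) by (meson corthogonalD)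
      then show "u \<bullet> v = 0" using i j by simp
    }
    have "u \<in> span S" using gs(1) u unfolding U_def using span_mem gs(3) by auto
    moreover have "span S \<subseteq> span (set (cols A))" using span_is_monotone[OF SC] .
    ultimately show "\<exists>a B. u = lincomb a B \<and> finite B \<and> B \<subseteq> set (cols A)"
      using in_spanE by blast
  next
    fix c assume "c \<in> set (cols A)"
    then have "c \<in> span U" using colspan gs(1) unfolding U_def by auto
    then show "\<exists>a B. c = lincomb a B \<and> finite B \<and> B \<subseteq> U" using in_spanE by blast
  qed
qed


lemma expansion:
  fixes U B :: "real vec set" and c :: "real vec"
  assumes fU: "finite U" and UC: "U \<subseteq> carrier_vec d"
    and nz: "\<forall>u\<in>U. u \<bullet> u \<noteq> 0" and orth: "\<forall>u\<in>U. \<forall>v\<in>U. u \<noteq> v \<longrightarrow> u \<bullet> v = 0"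
    and c: "c = module.lincomb (module_vec TYPE(real) d) a B" and fB: "finite B" and BU: "B \<subseteq> U"
    and i: "i < d"
  shows "c $ i = (\<Sum>u\<in>U. (\<Sum>l<d. c $ l * u $ l) / (\<Sum>l<d. u $ l * u $ l) * u $ i)"
proof -
  interpret vec_space "TYPE(real)" d .
  have BC: "B \<subseteq> carrier_vec d" using BU UC by auto
  have ci: "c $ l = (\<Sum>x\<in>B. a x * x $ l)" if "l < d" for l
    unfolding c using lincomb_index[OF that BC] .
  have ip: "(\<Sum>l<d. x $ l * u $ l) = x \<bullet> u" if "u \<in> U" for x u
    using that UC unfolding scalar_prod_def by (auto simp: atLeast0LessThan)
  have cu: "(\<Sum>l<d. c $ l * u $ l) = (if u \<in> B then a u * (u \<bullet> u) else 0)" if u: "u \<in> U" for u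
  proof -
    have "(\<Sum>l<d. c $ l * u $ l) = (\<Sum>l<d. (\<Sum>x\<in>B. a x * x $ l) * u $ l)"
      using ci by (intro sum.cong) auto
    also have "\<dots> = (\<Sum>l<d. \<Sum>x\<in>B. a x * (x $ l * u $ l))"
      by (simp add: sum_distrib_right mult.assoc)
    also have "\<dots> = (\<Sum>x\<in>B. a x * (\<Sum>l<d. x $ l * u $ l))"
      by (subst sum.swap) (simp add: sum_distrib_left)
    also have "\<dots> = (\<Sum>x\<in>B. if x = u then a u * (u \<bullet> u) else 0)"
    proof (intro sum.cong refl)
      fix x assume x: "x \<in> B"
      show "a x * (\<Sum>l<d. x $ l * u $ l) = (if x = u then a u * (u \<bullet> u) else 0)"
        using orth x BU u ip[OF u, of x] by auto
    qed
    also have "\<dots> = (if u \<in> B then a u * (u \<bullet> u) else 0)"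
      using fB by (simp add: sum.delta')
    finally show ?thesis .
  qed
  have "(\<Sum>u\<in>U. (\<Sum>l<d. c $ l * u $ l) / (\<Sum>l<d. u $ l * u $ l) * u $ i)
      = (\<Sum>u\<in>U. (if u \<in> B then a u * u $ i else 0))"
  proof (intro sum.cong refl)
    fix u assume u: "u \<in> U"
    show "(\<Sum>l<d. c $ l * u $ l) / (\<Sum>l<d. u $ l * u $ l) * u $ i = (if u \<in> B then a u * u $ i else 0)"
      using cu[OF u] ip[OF u, of u] nz u by auto
  qed
  also have "\<dots> = (\<Sum>u\<in>B. a u * u $ i)"
    using fU BU by (simp add: sum.If_cases Int_absorb1)
  also have "\<dots> = c $ i" using ci[OF i] by simp
  finally show ?thesis by simp
qed

lemma fixed_vec:
  fixes T :: "real mat" and u :: "real vec"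
  assumes T: "T \<in> carrier_mat d d" and TT: "T * T = T"
    and u: "u = module.lincomb (module_vec TYPE(real) d) a B" and fB: "finite B" and BU: "B \<subseteq> set (cols T)"
    and j: "j < d"
  shows "(\<Sum>l<d. T $$ (j, l) * u $ l) = u $ j"
proof -
  interpret vec_space "TYPE(real)" d .
  have BC: "B \<subseteq> carrier_vec d" using BU T cols_dim by blast
  have ui: "u $ l = (\<Sum>x\<in>B. a x * x $ l)" if "l < d" for l
    unfolding u using lincomb_index[OF that BC] .
  have colfix: "(\<Sum>l<d. T $$ (j, l) * x $ l) = x $ j" if x: "x \<in> B" for x
  proof -
    obtain p where p: "p < d" "x = col T p" using x BU T
      by (metis carrier_matD(2) cols_length cols_nth in_set_conv_nth subsetD)
    have "(T * T) $$ (j, p) = row T j \<bullet> col T p" using T p j by simp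
    also have "\<dots> = (\<Sum>l<d. T $$ (j, l) * T $$ (l, p))"
      using T p j unfolding scalar_prod_def by (auto simp: atLeast0LessThan intro!: sum.cong)
    finally have "(T * T) $$ (j, p) = (\<Sum>l<d. T $$ (j, l) * T $$ (l, p))" .
    then show ?thesis using TT p j T by auto
  qed
  have "(\<Sum>l<d. T $$ (j, l) * u $ l) = (\<Sum>l<d. \<Sum>x\<in>B. a x * (T $$ (j, l) * x $ l))"
    using ui by (simp add: sum_distrib_left mult_ac)
  also have "\<dots> = (\<Sum>x\<in>B. a x * (\<Sum>l<d. T $$ (j, l) * x $ l))"
    by (subst sum.swap) (simp add: sum_distrib_left)
  also have "\<dots> = (\<Sum>x\<in>B. a x * x $ j)" using colfix by simp
  also have "\<dots> = u $ j" using ui[OF j] by simp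
  finally show ?thesis .
qed

theorem corollary4p12:
  fixes T :: "real mat" and n k m :: nat and I :: "nat set"
  assumes "T \<in> carrier_mat n n"
    and "transpose_mat T = T"
    and "T * T = T"
    and "vec_space.rank n T = k"
    and "\<forall>i<n. \<forall>j<n. T $$ (i, i) = T $$ (j, j)"
    and "0 < m" and "m < n"
    and "I \<subseteq> {..<n}" and "card I = m"
  shows "real (vec_space.rank m (submatrix T I I)) \<ge> real m * real k / real n"
proof -
  note T = assms(1) and TT = assms(3)
  have sym: "T $$ (i, j) = T $$ (j, i)" if "i < n" "j < n" for i j
    using assms(2) T that by (metis carrier_matD index_transpose_mat(1))
  obtain U1 where U1: "finite U1" "U1 \<subseteq> carrier_vec n" "card U1 = k"
     "\<forall>u\<in>U1. u \<bullet> u \<noteq> 0" "\<forall>u\<in>U1. \<forall>v\<in>U1. u \<noteq> v \<longrightarrow> u \<bullet> v = 0"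
     "\<forall>c\<in>set (cols T). \<exists>a B. c = module.lincomb (module_vec TYPE(real) n) a B \<and> finite B \<and> B \<subseteq> U1"
     "\<forall>u\<in>U1. \<exists>a B. u = module.lincomb (module_vec TYPE(real) n) a B \<and> finite B \<and> B \<subseteq> set (cols T)"
    using basis_exists[OF T] assms(4) by blast
  have ipn: "(\<Sum>l<d. u $ l * u $ l) = u \<bullet> u" if "u \<in> carrier_vec d" for u :: "real vec" and d
    using that unfolding scalar_prod_def by (auto simp: atLeast0LessThan)
  have trT: "(\<Sum>i<n. T $$ (i, i)) = real k"
  proof -
    have "(\<Sum>i<n. T $$ (i, i)) = real (card U1)"
    proof (rule trace_proj[where v = "\<lambda>u l. u $ l" and T = "\<lambda>i j. T $$ (i, j)"])
      show "finite U1" by fact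
      show "\<And>u. u \<in> U1 \<Longrightarrow> (\<Sum>l<n. u $ l * u $ l) \<noteq> 0" using U1(2,4) ipn by auto
      show "\<And>i j. i < n \<Longrightarrow> j < n \<Longrightarrow> T $$ (i, j) = T $$ (j, i)" by (rule sym)
      show "T $$ (i, j) = (\<Sum>u\<in>U1. (\<Sum>l<n. T $$ (l, j) * u $ l) / (\<Sum>l<n. u $ l * u $ l) * u $ i)"
        if ij: "i < n" "j < n" for i j
      proof -
        have cj: "col T j \<in> set (cols T)" using T ij by (metis carrier_matD(2) cols_length cols_nth nth_mem)
        then obtain a B where aB: "col T j = module.lincomb (module_vec TYPE(real) n) a B" "finite B" "B \<subseteq> U1"
          using U1(6) by blast
        have "col T j $ i = (\<Sum>u\<in>U1. (\<Sum>l<n. col T j $ l * u $ l) / (\<Sum>l<n. u $ l * u $ l) * u $ i)"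
          by (rule expansion[OF U1(1,2,4,5) aB ij(1)])
        then show ?thesis using T ij by simp
      qed
      show "\<And>u j. u \<in> U1 \<Longrightarrow> j < n \<Longrightarrow> (\<Sum>l<n. T $$ (j, l) * u $ l) = u $ j"
        using U1(7) fixed_vec[OF T TT] by blast
    qed
    then show ?thesis using U1(3) by simp
  qed
  have n0: "0 < n" using assms(6,7) by simp
  define c where "c = T $$ (0, 0)"
  have diag: "T $$ (i, i) = c" if "i < n" for i using assms(5) that n0 unfolding c_def by blast
  have nc: "real n * c = real k" using trT diag by simp
  have c_eq: "c = real k / real n" using nc n0 by (simp add: field_simps)
  have c0: "c \<ge> 0" using c_eq by simp
  define A where "A = submatrix T I I"
  have cardI: "card {i. i < dim_row T \<and> i \<in> I} = m" "card {i. i < dim_col T \<and> i \<in> I} = m"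
  proof -
    have eq: "{i. i < n \<and> i \<in> I} = I" using assms(8) by blast
    have dr: "dim_row T = n" "dim_col T = n" using T by auto
    show "card {i. i < dim_row T \<and> i \<in> I} = m" "card {i. i < dim_col T \<and> i \<in> I} = m"
      by (simp_all only: dr eq assms(9))
  qed
  have AC: "A \<in> carrier_mat m m"
    by (rule carrier_matI) (simp_all only: A_def dim_submatrix cardI)
  have Aij: "A $$ (i, j) = T $$ (pick I i, pick I j)" if ij: "i < m" "j < m" for i j
    unfolding A_def by (rule submatrix_index) (simp_all only: cardI ij)
  have pI: "pick I i \<in> I" "pick I i < n" if i: "i < m" for i
  proof -
    have "i < card I \<or> infinite I" using i assms(9) by simp
    then show "pick I i \<in> I" by (rule pick_in_set)
    then show "pick I i < n" using assms(8) by blast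
  qed
  have pmono: "pick I x < pick I y" if "x < y" "y < m" for x y
  proof -
    have "y < card I \<or> infinite I" using that assms(9) by simp
    from pick_mono[OF this that(1)] show ?thesis .
  qed
  have inj: "inj_on (pick I) {..<m}"
  proof (rule inj_onI)
    fix x y assume xy: "x \<in> {..<m}" "y \<in> {..<m}" "pick I x = pick I y"
    show "x = y"
    proof (rule ccontr)
      assume "x \<noteq> y"
      then consider "x < y" | "y < x" by linarith
      then show False
      proof cases
        case 1 then show False using pmono[of x y] xy by simp
      next
        case 2 then show False using pmono[of y x] xy by simp
      qed
    qed
  qed
  have img: "pick I ` {..<m} = I"
  proof (rule card_subset_eq)
    show "finite I" using assms(8) finite_subset by blast
    show "pick I ` {..<m} \<subseteq> I" using pI by blast
    have "card (pick I ` {..<m}) = card {..<m}" by (rule card_image[OF inj])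
    then show "card (pick I ` {..<m}) = card I" using assms(9) by simp
  qed
  obtain U2 where U2: "finite U2" "U2 \<subseteq> carrier_vec m" "card U2 = vec_space.rank m A"
     "\<forall>u\<in>U2. u \<bullet> u \<noteq> 0" "\<forall>u\<in>U2. \<forall>v\<in>U2. u \<noteq> v \<longrightarrow> u \<bullet> v = 0"
     "\<forall>c\<in>set (cols A). \<exists>a B. c = module.lincomb (module_vec TYPE(real) m) a B \<and> finite B \<and> B \<subseteq> U2"
    using basis_exists[OF AC] by blast
  define r where "r = vec_space.rank m A"
  have core_app: "(\<Sum>i<m. A $$ (i, i))^2 \<le> real (card U2) * (\<Sum>i<m. \<Sum>j<m. (A $$ (i, j))^2)"
  proof (rule core[where v = "\<lambda>u l. u $ l" and A = "\<lambda>i j. A $$ (i, j)"])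
    show "finite U2" by fact
    show "\<And>u. u \<in> U2 \<Longrightarrow> (\<Sum>l<m. u $ l * u $ l) \<noteq> 0" using U2(2,4) ipn by auto
    show "A $$ (i, j) = A $$ (j, i)" if ij: "i < m" "j < m" for i j
    proof -
      have "T $$ (pick I i, pick I j) = T $$ (pick I j, pick I i)"
        by (rule sym) (use pI ij in auto)
      then show ?thesis using Aij[OF ij] Aij[OF ij(2,1)] by simp
    qed
    show "A $$ (i, j) = (\<Sum>u\<in>U2. (\<Sum>l<m. A $$ (l, j) * u $ l) / (\<Sum>l<m. u $ l * u $ l) * u $ i)"
      if ij: "i < m" "j < m" for i j
    proof -
      have cj: "col A j \<in> set (cols A)" using AC ij by (metis carrier_matD(2) cols_length cols_nth nth_mem)
      then obtain a B where aB: "col A j = module.lincomb (module_vec TYPE(real) m) a B" "finite B" "B \<subseteq> U2"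
        using U2(6) by blast
      have "col A j $ i = (\<Sum>u\<in>U2. (\<Sum>l<m. col A j $ l * u $ l) / (\<Sum>l<m. u $ l * u $ l) * u $ i)"
        by (rule expansion[OF U2(1,2,4,5) aB ij(1)])
      then show ?thesis using AC ij by simp
    qed
  qed
  have trA: "(\<Sum>i<m. A $$ (i, i)) = real m * c"
    using Aij diag pI by simp
  have frA: "(\<Sum>i<m. \<Sum>j<m. (A $$ (i, j))^2) \<le> real m * c"
  proof -
    have "(\<Sum>j<m. (A $$ (i, j))^2) \<le> c" if i: "i < m" for i
    proof -
      let ?p = "pick I i"
      have "(\<Sum>j<m. (A $$ (i, j))^2) = (\<Sum>j<m. (T $$ (?p, pick I j))^2)"
        using Aij i by simp
      also have "\<dots> = (\<Sum>l\<in>I. (T $$ (?p, l))^2)"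
        using sum.reindex[OF inj, of "\<lambda>l. (T $$ (?p, l))^2"] img by simp
      also have "\<dots> \<le> (\<Sum>l<n. (T $$ (?p, l))^2)"
        using assms(8) by (intro sum_mono2) auto
      also have "\<dots> = (\<Sum>l<n. T $$ (?p, l) * T $$ (l, ?p))"
      proof (intro sum.cong refl)
        fix l assume l: "l \<in> {..<n}"
        have "T $$ (?p, l) = T $$ (l, ?p)" by (rule sym) (use pI[OF i] l in auto)
        then show "(T $$ (?p, l))^2 = T $$ (?p, l) * T $$ (l, ?p)" by (simp add: power2_eq_square)
      qed
      also have "\<dots> = row T ?p \<bullet> col T ?p"
        using T pI[OF i] unfolding scalar_prod_def
        by (auto simp: atLeast0LessThan intro!: sum.cong)
      also have "\<dots> = (T * T) $$ (?p, ?p)" using T pI[OF i] by simp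
      also have "\<dots> = c" using TT diag pI[OF i] by simp
      finally show ?thesis .
    qed
    then have "(\<Sum>i<m. \<Sum>j<m. (A $$ (i, j))^2) \<le> (\<Sum>i<m. c)" by (intro sum_mono) auto
    then show ?thesis by simp
  qed
  have x0: "real m * c \<ge> 0" using c0 by simp
  have key: "(real m * c)^2 \<le> real r * (real m * c)"
  proof -
    have "(real m * c)^2 \<le> real r * (\<Sum>i<m. \<Sum>j<m. (A $$ (i, j))^2)"
      using core_app trA U2(3) unfolding r_def by simp
    also have "\<dots> \<le> real r * (real m * c)" using frA by (intro mult_left_mono) auto
    finally show ?thesis .
  qed
  have "real m * c \<le> real r"
  proof (cases "real m * c = 0")
    case True then show ?thesis using of_nat_0_le_iff[of r] by linarith
  next
    case False
    then have pos: "real m * c > 0" using x0 by linarith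
    show ?thesis by (rule mult_right_le_imp_le[OF key[unfolded power2_eq_square] pos])
  qed
  then show ?thesis unfolding r_def A_def c_eq by simp
qed

end
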